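(* Let $H$ be a Hilbert space and $U_{ik}\in B(H)$, $i,k=1,\dots,n$, operators satisfying relations (R1)–(R5). Then the matrix $U=(U_{kl})\in M_n(B(H))$ is unitary, i.e. $U^*U=1=UU^*$ in $M_n(B(H))$.
   Context: $n\ge2$, $\theta\in M_n(\mathbb R)$ skew-symmetric, $\omega_{ij}=e^{2\pi i\theta_{ij}}$. Relations, for all $i,j,k,l\in\{1,\dots,n\}$: (R1) $U_{ik}U_{jl}+\omega_{ji}U_{jk}U_{il}=\omega_{kl}U_{il}U_{jk}+\omega_{ji}\omega_{kl}U_{jl}U_{ik}$; (R2) $\sum_iU_{ik}U_{il}^*=\delta_{kl}1$; (R3) $\sum_iU_{il}^*U_{ik}=\delta_{kl}1$; (R4) $U_{jk}U_{ik}^*=0$ for $i\neq j$; (R5) $U_{ik}^*U_{jk}=0$ for $i\neq j$. *)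

theory Defs
  imports "HOL-Analysis.Analysis"
begin

text \<open>Complex inner product spaces and complex Hilbert spaces (not in the distribution).
  Convention: the inner product is conjugate-linear in the first and linear in the second argument.\<close>

class complex_inner = real_normed_vector +
  fixes scaleC :: "complex \<Rightarrow> 'a \<Rightarrow> 'a" (infixr \<open>*\<^sub>C\<close> 75)
    and cinner :: "'a \<Rightarrow> 'a \<Rightarrow> complex"
  assumes scaleC_add_right: "a *\<^sub>C (x + y) = a *\<^sub>C x + a *\<^sub>C y"
    and scaleC_add_left: "(a + b) *\<^sub>C x = a *\<^sub>C x + b *\<^sub>C x"
    and scaleC_scaleC: "a *\<^sub>C (b *\<^sub>C x) = (a * b) *\<^sub>C x"
    and scaleC_one: "1 *\<^sub>C x = x"
    and scaleR_scaleC: "scaleR r x = complex_of_real r *\<^sub>C x"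
    and cinner_commute: "cinner x y = cnj (cinner y x)"
    and cinner_add_right: "cinner x (y + z) = cinner x y + cinner x z"
    and cinner_scaleC_right: "cinner x (a *\<^sub>C y) = a * cinner x y"
    and cinner_self_real: "Im (cinner x x) = 0"
    and cinner_self_nonneg: "0 \<le> Re (cinner x x)"
    and cinner_self_eq_zero: "cinner x x = 0 \<longleftrightarrow> x = 0"
    and norm_eq_sqrt_cinner: "norm x = sqrt (Re (cinner x x))"

class chilbert_space = complex_inner + complete_space

definition bounded_clinear :: "('a::complex_inner \<Rightarrow> 'b::complex_inner) \<Rightarrow> bool" where
  "bounded_clinear T \<longleftrightarrow> bounded_linear T \<and> (\<forall>c x. T (c *\<^sub>C x) = c *\<^sub>C T x)"

definition adj :: "('a::complex_inner \<Rightarrow> 'a) \<Rightarrow> ('a \<Rightarrow> 'a)" where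
  "adj T = (THE S. \<forall>x y. cinner (S x) y = cinner x (T y))"

end

theory Submission
  imports Defs
begin


lemma cinner_add_left: "cinner (x + y) z = cinner x z + cinner (y::'a::complex_inner) z"
  by (metis cinner_commute cinner_add_right complex_cnj_add)

lemma cinner_scaleC_left: "cinner (a *\<^sub>C x) (y::'a::complex_inner) = cnj a * cinner x y"
  by (metis cinner_commute cinner_scaleC_right complex_cnj_mult)

lemma cinner_zero_right[simp]: "cinner (x::'a::complex_inner) 0 = 0"
  using cinner_add_right[of x 0 0] by simp

lemma cinner_zero_left[simp]: "cinner 0 (x::'a::complex_inner) = 0"
  using cinner_add_left[of 0 0 x] by simp

lemma scaleC_minus1: "(-1) *\<^sub>C x = - (x::'a::complex_inner)"
  using scaleR_scaleC[of "-1" x] by simp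

lemma cinner_minus_right: "cinner x (- y) = - cinner x (y::'a::complex_inner)"
  by (metis scaleC_minus1 cinner_scaleC_right mult_minus1)

lemma cinner_minus_left: "cinner (- x) y = - cinner x (y::'a::complex_inner)"
  by (metis cinner_commute cinner_minus_right complex_cnj_minus)

lemma cinner_diff_right: "cinner x (y - z) = cinner x y - cinner x (z::'a::complex_inner)"
  unfolding diff_conv_add_uminus cinner_add_right cinner_minus_right by simp

lemma cinner_diff_left: "cinner (x - y) z = cinner x z - cinner y (z::'a::complex_inner)"
  unfolding diff_conv_add_uminus cinner_add_left cinner_minus_left by simp

lemma cinner_sum_right: "cinner x (sum f A) = (\<Sum>i\<in>A. cinner (x::'a::complex_inner) (f i))"
  by (induct A rule: infinite_finite_induct) (simp_all add: cinner_add_right)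

lemma cinner_sum_left: "cinner (sum f A) x = (\<Sum>i\<in>A. cinner (f i) (x::'a::complex_inner))"
  by (induct A rule: infinite_finite_induct) (simp_all add: cinner_add_left)

lemma cinner_self_norm: "cinner x x = complex_of_real (norm (x::'a::complex_inner) ^ 2)"
  using cinner_self_real[of x] cinner_self_nonneg[of x] norm_eq_sqrt_cinner[of x]
  by (simp add: complex_eq_iff)

lemma norm_sq_Re: "norm (x::'a::complex_inner) ^ 2 = Re (cinner x x)"
  by (simp add: cinner_self_norm)

lemma scaleC_zero_right[simp]: "a *\<^sub>C (0::'a::complex_inner) = 0"
  using scaleC_add_right[of a 0 0] by simp

lemma norm_expand: "norm (v + c *\<^sub>C y) ^ 2
   = norm v ^ 2 + (cmod c)^2 * norm (y::'a::complex_inner) ^ 2 + 2 * Re (c * cinner v y)"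
proof -
  have h0: "cinner (v + c *\<^sub>C y) (v + c *\<^sub>C y)
     = cinner v v + c * cinner v y + cnj c * cinner y v + cnj c * (c * cinner y y)"
    unfolding cinner_add_left cinner_add_right cinner_scaleC_left cinner_scaleC_right
    by (simp add: algebra_simps)
  have h1: "cinner y v = cnj (cinner v y)" by (rule cinner_commute)
  have h2: "cnj c * (c * cinner y y) = complex_of_real ((cmod c)^2 * norm y^2)"
  proof -
    have "cnj c * c = complex_of_real ((cmod c)^2)"
      by (simp add: complex_mult_cnj cmod_power2 mult.commute[of "cnj c"])
    then show ?thesis by (simp add: cinner_self_norm mult.assoc[symmetric])
  qed
  have "norm (v + c *\<^sub>C y) ^ 2 = Re (cinner (v + c *\<^sub>C y) (v + c *\<^sub>C y))" by (rule norm_sq_Re)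
  also have "\<dots> = Re (cinner v v) + Re (c * cinner v y) + Re (cnj c * cnj (cinner v y))
       + (cmod c)^2 * norm y^2"
    unfolding h0 h1 h2 by simp
  also have "Re (cnj c * cnj (cinner v y)) = Re (c * cinner v y)" by simp
  finally show ?thesis by (simp add: norm_sq_Re)
qed


lemma cinner_bound: "cmod (cinner v y) \<le> norm v * norm (y::'a::complex_inner)"
proof (cases "v = 0")
  case True then show ?thesis by simp
next
  case False
  define r where "r = norm v ^ 2"
  have r: "r > 0" using False by (simp add: r_def)
  define a where "a = cinner v y"
  define c where "c = - a / complex_of_real r"
  have e1: "norm (y + c *\<^sub>C v) ^ 2 = norm y ^ 2 + (cmod c)^2 * r + 2 * Re (c * cinner y v)"
    by (simp add: norm_expand r_def)
  have e2: "cinner y v = cnj a" by (simp add: a_def cinner_commute[of y v])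
  have e3: "(cmod c)^2 * r = (cmod a)^2 / r"
    using r by (simp add: c_def norm_divide power_divide power2_eq_square)
  have aa: "a * cnj a = complex_of_real ((cmod a)^2)" by (simp add: complex_mult_cnj cmod_power2)
  have e4': "c * cnj a = - (a * cnj a) / complex_of_real r" by (simp add: c_def)
  have e4: "c * cnj a = - complex_of_real ((cmod a)^2 / r)"
    unfolding e4' aa by simp
  have e5: "Re (c * cnj a) = - ((cmod a)^2 / r)" by (simp only: e4) simp
  have "0 \<le> norm (y + c *\<^sub>C v) ^ 2" by simp
  then have "0 \<le> norm y ^ 2 + (cmod a)^2 / r + 2 * (- ((cmod a)^2 / r))"
    unfolding e1 e2 e3 e5 .
  then have "(cmod a)^2 / r \<le> norm y ^ 2" by simp
  then have "(cmod a)^2 \<le> norm y ^ 2 * r" using r by (simp add: divide_le_eq)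
  then have "(cmod a)^2 \<le> (norm v * norm y)^2" by (simp add: r_def power_mult_distrib mult.commute)
  then show ?thesis unfolding a_def by (rule power2_le_imp_le) simp
qed

lemma bounded_linear_cinner_right: "bounded_linear (\<lambda>y. cinner (v::'a::complex_inner) y)"
proof (rule bounded_linear_intro[where K = "norm v"])
  show "cinner v (x + y) = cinner v x + cinner v y" for x y by (rule cinner_add_right)
  show "cinner v (r *\<^sub>R x) = r *\<^sub>R cinner v x" for r x
    by (simp add: scaleR_scaleC cinner_scaleC_right scaleR_conv_of_real)
  show "norm (cinner v x) \<le> norm x * norm v" for x
    using cinner_bound[of v x] by (simp add: mult.commute)
qed

lemma pA: "norm (a + b)^2 = norm a^2 + norm b^2 + 2 * Re (cinner a (b::'a::complex_inner))"
proof -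
  have "norm (a + 1 *\<^sub>C b) ^ 2 = norm a ^ 2 + (cmod 1)^2 * norm b ^ 2 + 2 * Re (1 * cinner a b)"
    by (rule norm_expand)
  then show ?thesis by (simp only: scaleC_one norm_one power_one mult_1 mult_1_left)
qed

lemma pB: "norm (a - b)^2 = norm a^2 + norm b^2 - 2 * Re (cinner a (b::'a::complex_inner))"
proof -
  have ab: "a + (-1) *\<^sub>C b = a - b" by (simp only: scaleC_minus1 diff_conv_add_uminus)
  have "norm (a + (-1) *\<^sub>C b) ^ 2 = norm a ^ 2 + (cmod (-1))^2 * norm b ^ 2 + 2 * Re ((-1) * cinner a b)"
    by (rule norm_expand)
  then show ?thesis unfolding ab by simp
qed

lemma parallelogram: "norm (a + b) ^ 2 + norm (a - b) ^ 2 = 2 * norm a ^ 2 + 2 * norm (b::'a::complex_inner) ^ 2"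
  using pA[of a b] pB[of a b] by linarith

lemma min_norm_exists:
  fixes C :: "'a::chilbert_space set"
  assumes cl: "closed C" and ne: "C \<noteq> {}"
    and mid: "\<And>a b. a \<in> C \<Longrightarrow> b \<in> C \<Longrightarrow> (1/2::real) *\<^sub>R (a + b) \<in> C"
  shows "\<exists>z\<in>C. \<forall>c\<in>C. norm z \<le> norm c"
proof -
  define d where "d = Inf (norm ` C)"
  have bdd: "bdd_below (norm ` C)" by (rule bdd_belowI[of _ 0]) auto
  have low: "d \<le> norm c" if "c \<in> C" for c
    unfolding d_def using bdd that by (simp add: cInf_lower)
  have d0: "0 \<le> d" unfolding d_def using ne by (auto intro: cInf_greatest)
  have "\<exists>c. c \<in> C \<and> norm c ^ 2 < d ^ 2 + inverse (real (Suc n))" for n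
  proof -
    have "sqrt (d ^ 2) < sqrt (d ^ 2 + inverse (real (Suc n)))"
      by (rule real_sqrt_less_mono) simp
    moreover have "sqrt (d ^ 2) = d" using d0 by simp
    ultimately have "d < sqrt (d ^ 2 + inverse (real (Suc n)))" by simp
    then obtain c where "c \<in> C" "norm c < sqrt (d ^ 2 + inverse (real (Suc n)))"
      using cInf_lessD[of "norm ` C"] ne unfolding d_def by auto
    moreover from this(2) have "norm c ^ 2 < (sqrt (d ^ 2 + inverse (real (Suc n)))) ^ 2"
      by (intro power_strict_mono) auto
    then have "norm c ^ 2 < d ^ 2 + inverse (real (Suc n))" by simp
    ultimately show ?thesis by blast
  qed
  then obtain s where s: "\<And>n. s n \<in> C" "\<And>n. norm (s n) ^ 2 < d ^ 2 + inverse (real (Suc n))"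
    by metis
  have diff: "norm (s m - s n) ^ 2 \<le> 2 * inverse (real (Suc m)) + 2 * inverse (real (Suc n))" for m n
  proof -
    have "d \<le> norm ((1/2::real) *\<^sub>R (s m + s n))" using low mid s(1) by blast
    then have "d ^ 2 \<le> (norm (s m + s n) / 2) ^ 2" using d0 by (simp add: power_mono)
    then have "4 * d ^ 2 \<le> norm (s m + s n) ^ 2" by (simp add: power_divide)
    moreover note parallelogram[of "s m" "s n"] s(2)[of m] s(2)[of n]
    ultimately show ?thesis by linarith
  qed
  have "Cauchy s"
  proof (rule CauchyI)
    fix e :: real assume e: "0 < e"
    obtain M :: nat where M: "4 / e^2 < real M" using reals_Archimedean2 by blast
    have "\<forall>m\<ge>M. \<forall>n\<ge>M. norm (s m - s n) < e"
    proof (intro allI impI)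
      fix m n assume mn: "M \<le> m" "M \<le> n"
      have e2: "e^2 > 0" using e by simp
      have "4 / e^2 > 0" using e2 by simp
      then have Mpos: "real M > 0" using M by linarith
      have "inverse (real (Suc m)) \<le> inverse (real M)" using mn Mpos by (simp add: le_imp_inverse_le)
      moreover have "inverse (real (Suc n)) \<le> inverse (real M)" using mn Mpos by (simp add: le_imp_inverse_le)
      moreover have "4 * inverse (real M) < e^2"
      proof -
        have "4 < real M * e^2" using M e2 by (simp add: divide_less_eq)
        then have "4 / real M < e^2" using Mpos by (simp add: divide_less_eq mult.commute)
        then show ?thesis by (simp add: divide_inverse)
      qed
      ultimately have "norm (s m - s n) ^ 2 < e ^ 2" using diff[of m n] by linarith
      then show "norm (s m - s n) < e" using e by (simp add: power_less_imp_less_base)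
    qed
    then show "\<exists>M. \<forall>m\<ge>M. \<forall>n\<ge>M. norm (s m - s n) < e" by blast
  qed
  then obtain z where z: "s \<longlonglongrightarrow> z" using Cauchy_convergent_iff convergent_def by blast
  have zC: "z \<in> C" using closed_sequentially[OF cl s(1) z] .
  have "norm z ^ 2 \<le> d ^ 2"
  proof (rule LIMSEQ_le)
    show "(\<lambda>n. norm (s n) ^ 2) \<longlonglongrightarrow> norm z ^ 2" by (intro tendsto_intros z)
    show "(\<lambda>n. d ^ 2 + inverse (real (Suc n))) \<longlonglongrightarrow> d ^ 2"
      using tendsto_add[OF tendsto_const LIMSEQ_inverse_real_of_nat, of "d^2"] by simp
    show "\<exists>N. \<forall>n\<ge>N. norm (s n) ^ 2 \<le> d ^ 2 + inverse (real (Suc n))"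
      using s(2) less_imp_le by blast
  qed
  then have "norm z \<le> d" using d0 by (rule power2_le_imp_le)
  then show ?thesis using zC low by force
qed


lemma riesz:
  fixes f :: "'a::chilbert_space \<Rightarrow> complex"
  assumes add: "\<And>x y. f (x + y) = f x + f y" and sc: "\<And>c x. f (c *\<^sub>C x) = c * f x"
    and cont: "continuous_on UNIV f"
  shows "\<exists>v. \<forall>y. cinner v y = f y"
proof (cases "\<forall>y. f y = 0")
  case True then show ?thesis by (intro exI[of _ 0]) simp
next
  case False
  then obtain y0 where y0: "f y0 \<noteq> 0" by blast
  have f0: "f 0 = 0" using sc[of 0 0] by simp
  have fdiff: "f (x - y) = f x - f y" for x y
  proof -
    have e: "x - y = x + (-1) *\<^sub>C y" by (simp only: scaleC_minus1 diff_conv_add_uminus)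
    show ?thesis unfolding e add sc by simp
  qed
  define C where "C = {y. f y = 1}"
  have "closed C" unfolding C_def by (rule closed_Collect_eq[OF cont continuous_on_const])
  moreover have "C \<noteq> {}"
  proof -
    have "f ((1 / f y0) *\<^sub>C y0) = 1" using y0 by (simp add: sc)
    then show ?thesis unfolding C_def by blast
  qed
  moreover have "(1/2::real) *\<^sub>R (a + b) \<in> C" if "a \<in> C" "b \<in> C" for a b
    using that unfolding C_def by (simp add: scaleR_scaleC sc add)
  ultimately obtain z where zC: "z \<in> C" and zmin: "\<And>c. c \<in> C \<Longrightarrow> norm z \<le> norm c"
    using min_norm_exists[of C] by blast
  have fz: "f z = 1" using zC by (simp add: C_def)
  have orth: "cinner z k = 0" if fk: "f k = 0" for k
  proof -
    define a where "a = cinner z k"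
    define s where "s = 1 / (norm k ^ 2 + 1)"
    have kk: "0 < norm k ^ 2 + 1" using zero_le_power2[of "norm k"] by linarith
    have s0: "s > 0" using kk by (simp add: s_def)
    have sk: "s * norm k ^ 2 < 1" using kk by (simp add: s_def field_simps)
    define t where "t = - complex_of_real s * cnj a"
    have "z + t *\<^sub>C k \<in> C" unfolding C_def by (simp add: add sc fk fz)
    then have "norm z \<le> norm (z + t *\<^sub>C k)" by (rule zmin)
    then have "norm z ^ 2 \<le> norm (z + t *\<^sub>C k) ^ 2" by (simp add: power_mono)
    also have "\<dots> = norm z ^ 2 + (cmod t)^2 * norm k ^ 2 + 2 * Re (t * a)"
      unfolding a_def by (rule norm_expand)
    finally have ineq: "0 \<le> (cmod t)^2 * norm k ^ 2 + 2 * Re (t * a)" by simp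
    have ct: "(cmod t)^2 = s^2 * (cmod a)^2" using s0 by (simp add: t_def norm_mult power_mult_distrib)
    have "cnj a * a = complex_of_real ((cmod a)^2)"
      by (simp add: complex_mult_cnj cmod_power2 mult.commute[of "cnj a"])
    then have "t * a = - complex_of_real (s * (cmod a)^2)" by (simp add: t_def mult.assoc)
    then have rt: "Re (t * a) = - (s * (cmod a)^2)" by simp
    from ineq have "0 \<le> s * ((cmod a)^2 * (s * norm k ^ 2 - 2))"
      unfolding ct rt by (simp add: algebra_simps power2_eq_square)
    then have "0 \<le> (cmod a)^2 * (s * norm k ^ 2 - 2)" using s0 by (simp add: zero_le_mult_iff)
    moreover have "s * norm k ^ 2 - 2 < 0" using sk by simp
    ultimately have "(cmod a)^2 \<le> 0" by (simp add: zero_le_mult_iff)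
    then show ?thesis unfolding a_def by simp
  qed
  have z0: "z \<noteq> 0" using fz f0 by auto
  define r where "r = norm z ^ 2"
  have r0: "r > 0" using z0 by (simp add: r_def)
  have "cinner ((1 / complex_of_real r) *\<^sub>C z) y = f y" for y
  proof -
    have "f (y - f y *\<^sub>C z) = 0" by (simp add: fdiff sc fz)
    then have "cinner z (y - f y *\<^sub>C z) = 0" by (rule orth)
    then have "cinner z y = f y * complex_of_real r"
      by (simp add: cinner_diff_right cinner_scaleC_right cinner_self_norm r_def)
    then show ?thesis using r0 by (simp add: cinner_scaleC_left)
  qed
  then show ?thesis by blast
qed

lemma adj_prop:
  fixes T :: "'a::chilbert_space \<Rightarrow> 'a"
  assumes T: "bounded_clinear T"
  shows "cinner (adj T x) y = cinner x (T y)"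
proof -
  have bl: "bounded_linear T" and hom: "\<And>c x. T (c *\<^sub>C x) = c *\<^sub>C T x"
    using T unfolding bounded_clinear_def by auto
  have Tadd: "T (a + b) = T a + T b" for a b by (rule linear_add[OF bounded_linear.linear[OF bl]])
  have "\<forall>x. \<exists>v. \<forall>y. cinner v y = cinner x (T y)"
  proof (intro allI riesz)
    fix x
    show "cinner x (T (a + b)) = cinner x (T a) + cinner x (T b)" for a b
      by (simp add: Tadd cinner_add_right)
    show "cinner x (T (c *\<^sub>C a)) = c * cinner x (T a)" for c a
      by (simp add: hom cinner_scaleC_right)
    show "continuous_on UNIV (\<lambda>y. cinner x (T y))"
      using continuous_on_compose[OF linear_continuous_on[OF bl] linear_continuous_on[OF bounded_linear_cinner_right[of x]]]
      by (simp add: o_def)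
  qed
  from choice[OF this] obtain S where S0: "\<forall>x y. cinner (S x) y = cinner x (T y)" by blast
  have S: "\<And>x y. cinner (S x) y = cinner x (T y)" using S0 by blast
  have "adj T = S" unfolding adj_def
  proof (rule the_equality)
    show "\<forall>x y. cinner (S x) y = cinner x (T y)" using S by blast
    fix S' assume S': "\<forall>x y. cinner (S' x) y = cinner x (T y)"
    show "S' = S"
    proof
      fix x
      have e1: "cinner (S' x) w = cinner (S x) w" for w by (simp only: S'[rule_format] S)
      have "cinner (S' x - S x) (S' x - S x) = 0" by (simp only: cinner_diff_left e1 diff_self)
      then have "S' x - S x = 0" by (simp only: cinner_self_eq_zero)
      then show "S' x = S x" by (simp only: right_minus_eq)
    qed
  qed
  then show ?thesis by (simp add: S)
qed




lemma bl_sum: "bounded_linear f \<Longrightarrow> f (sum g A) = (\<Sum>a\<in>A. f (g a))"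
proof (induct A rule: infinite_finite_induct)
  case (infinite A) then show ?case by (simp add: linear_0[OF bounded_linear.linear])
next
  case empty then show ?case by (simp add: linear_0[OF bounded_linear.linear])
next
  case (insert a A) then show ?case by (simp add: linear_add[OF bounded_linear.linear])
qed

lemma cinner_adj_swap:
  assumes "\<And>a b. cinner (adj T a) b = cinner a (T b)"
  shows "cinner (T a) b = cinner a (adj T b)"
  by (metis assms cinner_commute)

lemma key:
  fixes U :: "nat \<Rightarrow> nat \<Rightarrow> 'h::chilbert_space \<Rightarrow> 'h" and I :: "nat set"
  assumes fin: "finite I"
    and adjp: "\<And>i k a b. i\<in>I \<Longrightarrow> k\<in>I \<Longrightarrow> cinner (adj (U i k) a) b = cinner a (U i k b)"
    and lin: "\<And>i k. i\<in>I \<Longrightarrow> k\<in>I \<Longrightarrow> bounded_linear (U i k)"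
    and R2': "\<And>k x. k\<in>I \<Longrightarrow> (\<Sum>i\<in>I. U i k (adj (U i k) x)) = x"
    and R3': "\<And>k l y. k\<in>I \<Longrightarrow> l\<in>I \<Longrightarrow> (\<Sum>i\<in>I. adj (U i k) (U i l y)) = (if l = k then y else 0)"
  shows "\<forall>j\<in>I. (\<Sum>k\<in>I. U j k (adj (U j k) x)) = x"
proof -
  define z where "z j k = adj (U j k) x" for j k
  define W where "W j i = (\<Sum>k\<in>I. U i k (z j k))" for j i
  define Sj where "Sj j = (\<Sum>k\<in>I. norm (z j k) ^ 2)" for j
  have Sj0: "0 \<le> Sj j" for j unfolding Sj_def by (simp add: sum_nonneg)
  have inner_xW: "cinner x (W j j) = complex_of_real (Sj j)" if j: "j \<in> I" for j
  proof -
    have "cinner x (W j j) = (\<Sum>k\<in>I. cinner x (U j k (z j k)))"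
      unfolding W_def by (rule cinner_sum_right)
    also have "\<dots> = (\<Sum>k\<in>I. cinner (z j k) (z j k))"
      by (rule sum.cong) (simp_all add: z_def adjp j)
    also have "\<dots> = complex_of_real (Sj j)"
      by (simp add: Sj_def cinner_self_norm)
    finally show ?thesis .
  qed
  have sumW: "(\<Sum>i\<in>I. cinner (W j i) (W j i)) = complex_of_real (Sj j)" if j: "j \<in> I" for j
  proof -
    have "(\<Sum>i\<in>I. cinner (W j i) (W j i))
        = (\<Sum>i\<in>I. \<Sum>k\<in>I. \<Sum>l\<in>I. cinner (U i k (z j k)) (U i l (z j l)))"
      unfolding W_def cinner_sum_left cinner_sum_right
      apply (rule sum.cong[OF refl])
      apply (rule sum.swap)
      done
    also have "\<dots> = (\<Sum>i\<in>I. \<Sum>k\<in>I. \<Sum>l\<in>I. cinner (z j k) (adj (U i k) (U i l (z j l))))"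
      by (intro sum.cong refl) (simp add: cinner_adj_swap adjp)
    also have "\<dots> = (\<Sum>k\<in>I. \<Sum>l\<in>I. \<Sum>i\<in>I. cinner (z j k) (adj (U i k) (U i l (z j l))))"
      apply (rule trans[OF sum.swap])
      apply (rule sum.cong[OF refl])
      apply (rule sum.swap)
      done
    also have "\<dots> = (\<Sum>k\<in>I. \<Sum>l\<in>I. cinner (z j k) (if l = k then z j l else 0))"
      by (intro sum.cong refl) (simp add: cinner_sum_right[symmetric] R3')
    also have "\<dots> = (\<Sum>k\<in>I. cinner (z j k) (z j k))"
      by (intro sum.cong refl) (simp add: fin if_distrib cong: if_cong)
    also have "\<dots> = complex_of_real (Sj j)"
      by (simp add: Sj_def cinner_self_norm)
    finally show ?thesis .
  qed
  have bound: "norm (x - W j j) ^ 2 \<le> norm x ^ 2 - Sj j" if j: "j \<in> I" for j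
  proof -
    have "norm (W j j) ^ 2 \<le> (\<Sum>i\<in>I. norm (W j i) ^ 2)"
      by (rule member_le_sum[OF j]) (simp_all add: fin)
    also have "(\<Sum>i\<in>I. norm (W j i) ^ 2) = Re (\<Sum>i\<in>I. cinner (W j i) (W j i))"
      by (simp add: norm_sq_Re)
    also have "\<dots> = Sj j" using sumW[OF j] by simp
    finally have "norm (W j j) ^ 2 \<le> Sj j" .
    moreover have "norm (x - W j j) ^ 2 = norm x ^ 2 + norm (W j j) ^ 2 - 2 * Re (cinner x (W j j))"
      by (rule pB)
    moreover have "Re (cinner x (W j j)) = Sj j" using inner_xW[OF j] by simp
    ultimately show ?thesis by linarith
  qed
  have total: "(\<Sum>j\<in>I. Sj j) = real (card I) * norm x ^ 2"
  proof -
    have "(\<Sum>j\<in>I. Sj j) = (\<Sum>k\<in>I. \<Sum>j\<in>I. norm (z j k) ^ 2)"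
      unfolding Sj_def by (rule sum.swap)
    also have "\<dots> = (\<Sum>k\<in>I. norm x ^ 2)"
    proof (rule sum.cong[OF refl])
      fix k assume k: "k \<in> I"
      have "(\<Sum>j\<in>I. norm (z j k) ^ 2) = Re (\<Sum>j\<in>I. cinner (z j k) (z j k))"
        by (simp add: norm_sq_Re)
      also have "(\<Sum>j\<in>I. cinner (z j k) (z j k)) = (\<Sum>j\<in>I. cinner x (U j k (z j k)))"
        by (rule sum.cong) (simp_all add: z_def adjp k)
      also have "\<dots> = cinner x (\<Sum>j\<in>I. U j k (z j k))" by (simp add: cinner_sum_right)
      also have "\<dots> = cinner x x" using R2'[OF k, of x] by (simp add: z_def)
      finally show "(\<Sum>j\<in>I. norm (z j k) ^ 2) = norm x ^ 2" by (simp add: norm_sq_Re)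
    qed
    finally show ?thesis by simp
  qed
  have "(\<Sum>j\<in>I. norm (x - W j j) ^ 2) \<le> (\<Sum>j\<in>I. norm x ^ 2 - Sj j)"
    by (rule sum_mono) (rule bound)
  also have "\<dots> = 0" using total by (simp add: sum_subtractf)
  finally have "(\<Sum>j\<in>I. norm (x - W j j) ^ 2) = 0"
    by (simp add: antisym sum_nonneg)
  then have "\<forall>j\<in>I. norm (x - W j j) ^ 2 = 0"
    by (subst (asm) sum_nonneg_eq_0_iff) (simp_all add: fin)
  then show ?thesis by (simp add: W_def z_def)
qed

theorem proposition3p9:
  fixes n :: nat
    and \<theta> :: "nat \<Rightarrow> nat \<Rightarrow> real"
    and \<omega> :: "nat \<Rightarrow> nat \<Rightarrow> complex"
    and U :: "nat \<Rightarrow> nat \<Rightarrow> ('h::chilbert_space \<Rightarrow> 'h)"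
  assumes n2: "n \<ge> 2"
    and skew: "\<forall>i\<in>{1..n}. \<forall>j\<in>{1..n}. \<theta> i j = - \<theta> j i"
    and omega: "\<forall>i\<in>{1..n}. \<forall>j\<in>{1..n}. \<omega> i j = exp (2 * complex_of_real pi * \<i> * complex_of_real (\<theta> i j))"
    and bdd: "\<forall>i\<in>{1..n}. \<forall>k\<in>{1..n}. bounded_clinear (U i k)"
    and R1: "\<forall>i\<in>{1..n}. \<forall>j\<in>{1..n}. \<forall>k\<in>{1..n}. \<forall>l\<in>{1..n}. \<forall>x.
              U i k (U j l x) + \<omega> j i *\<^sub>C U j k (U i l x)
            = \<omega> k l *\<^sub>C U i l (U j k x) + (\<omega> j i * \<omega> k l) *\<^sub>C U j l (U i k x)"
    and R2: "\<forall>k\<in>{1..n}. \<forall>l\<in>{1..n}. \<forall>x.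
              (\<Sum>i=1..n. U i k (adj (U i l) x)) = (if k = l then x else 0)"
    and R3: "\<forall>k\<in>{1..n}. \<forall>l\<in>{1..n}. \<forall>x.
              (\<Sum>i=1..n. adj (U i l) (U i k x)) = (if k = l then x else 0)"
    and R4: "\<forall>i\<in>{1..n}. \<forall>j\<in>{1..n}. \<forall>k\<in>{1..n}. i \<noteq> j \<longrightarrow> (\<forall>x. U j k (adj (U i k) x) = 0)"
    and R5: "\<forall>i\<in>{1..n}. \<forall>j\<in>{1..n}. \<forall>k\<in>{1..n}. i \<noteq> j \<longrightarrow> (\<forall>x. adj (U i k) (U j k x) = 0)"
  shows "(\<forall>k\<in>{1..n}. \<forall>l\<in>{1..n}. \<forall>x.
            (\<Sum>i=1..n. adj (U i k) (U i l x)) = (if k = l then x else 0))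
       \<and> (\<forall>k\<in>{1..n}. \<forall>l\<in>{1..n}. \<forall>x.
            (\<Sum>i=1..n. U k i (adj (U l i) x)) = (if k = l then x else 0))"
proof -
  let ?I = "{1..n}"
  have adjp: "\<And>i k a b. i\<in>?I \<Longrightarrow> k\<in>?I \<Longrightarrow> cinner (adj (U i k) a) b = cinner a (U i k b)"
    using bdd adj_prop by blast
  have lin: "\<And>i k. i\<in>?I \<Longrightarrow> k\<in>?I \<Longrightarrow> bounded_linear (U i k)"
    using bdd unfolding bounded_clinear_def by blast
  have R2': "\<And>k x. k\<in>?I \<Longrightarrow> (\<Sum>i\<in>?I. U i k (adj (U i k) x)) = x"
    using R2 by simp
  have R3': "\<And>k l y. k\<in>?I \<Longrightarrow> l\<in>?I \<Longrightarrow> (\<Sum>i\<in>?I. adj (U i k) (U i l y)) = (if l = k then y else 0)"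
    using R3 by blast
  have K: "\<forall>j\<in>?I. (\<Sum>k\<in>?I. U j k (adj (U j k) x)) = x" for x
    apply (rule key[of "{1..n}" U x])
    apply (rule finite_atLeastAtMost)
    apply (erule (1) adjp)
    apply (erule (1) lin)
    apply (erule R2')
    apply (erule (1) R3')
    done
  show ?thesis
  proof (intro conjI ballI allI)
    fix k l x assume k: "k \<in> ?I" and l: "l \<in> ?I"
    show "(\<Sum>i=1..n. adj (U i k) (U i l x)) = (if k = l then x else 0)"
      using R3' [OF k l, of x] by (cases "k = l") simp_all
  next
    fix k l x assume k: "k \<in> ?I" and l: "l \<in> ?I"
    show "(\<Sum>i=1..n. U k i (adj (U l i) x)) = (if k = l then x else 0)"
    proof (cases "k = l")
      case True
      have "(\<Sum>i=1..n. U l i (adj (U l i) x)) = x" using K[of x] l by blast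
      then show ?thesis unfolding True by (simp only: if_P[OF refl])
    next
      case False
      have "(\<Sum>i=1..n. U k i (adj (U l i) x)) = (\<Sum>i=1..n. 0)"
      proof (rule sum.cong[OF refl])
        fix i assume i: "i \<in> {1..n}"
        have lk: "l \<noteq> k" using False by simp
        show "U k i (adj (U l i) x) = 0" by (rule R4[rule_format, OF l k i lk])
      qed
      then show ?thesis using False by simp
    qed
  qed
qed


end
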